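(* Let $N\ge1$ and $q$ be integers with $0\le q<\frac N2$. Let $d:[0,\infty)\to\mathbb{R}$, let $\nu_1,\dots,\nu_N:[0,\infty)\to\mathbb{R}$ be bounded, and let $\eta:[0,\infty)\to\mathbb{R}^N$ be arbitrary (unbounded allowed) such that for every $t\ge0$ there is a set $W(t)\subseteq\{1,\dots,N\}$ with $\operatorname{supp}(\eta(t))\subseteq W(t)$ and $\operatorname{card}(W(t))\le q$ (the set $W(t)$ is unknown and may vary with $t$). Let $D_j(t)=d(t)+\nu_j(t)+\eta_j(t)$. For every $J\subseteq\{1,\dots,N\}$ with $\operatorname{card}(J)=N-q$ define $$\hat d_J(t)=\frac{1}{N-q}\sum_{j\in J}D_j(t),\qquad \pi_J(t)=\max_{j\in J}|\hat d_J(t)-D_j(t)|,$$ and let $\sigma(t)$ be any subset $J$ with $\operatorname{card}(J)=N-q$ minimizing $\pi_J(t)$. Then the fused estimate $\hat d(t)=\hat d_{\sigma(t)}(t)$ satisfies, for all $t\ge0$, $$|\hat d(t)-d(t)|\le 3\|\nu\|_\infty .$$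
   Context: For $v\in\mathbb{R}^N$, $\operatorname{supp}(v)=\{i: v_i\ne0\}$. $\|\nu_j\|_\infty=\sup_{t\ge0}|\nu_j(t)|$ and $\|\nu\|_\infty=\max_{j}\|\nu_j\|_\infty$; these bounds are not assumed known to the estimator. *)

theory Defs
  imports "HOL-Analysis.Analysis"
begin

text \<open>Sensors are indexed by j in {1..N}; nu j t is the bounded noise of sensor j,
  eta t j the j-th component of the sparse (attack) vector eta(t).\<close>

definition meas :: "(real \<Rightarrow> real) \<Rightarrow> (nat \<Rightarrow> real \<Rightarrow> real) \<Rightarrow> (real \<Rightarrow> nat \<Rightarrow> real) \<Rightarrow> nat \<Rightarrow> real \<Rightarrow> real" where
  "meas d nu eta j t = d t + nu j t + eta t j"

definition dhat :: "nat \<Rightarrow> nat \<Rightarrow> (nat \<Rightarrow> real \<Rightarrow> real) \<Rightarrow> nat set \<Rightarrow> real \<Rightarrow> real" where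
  "dhat N q D J t = (1 / real (N - q)) * (\<Sum>j\<in>J. D j t)"

definition piJ :: "nat \<Rightarrow> nat \<Rightarrow> (nat \<Rightarrow> real \<Rightarrow> real) \<Rightarrow> nat set \<Rightarrow> real \<Rightarrow> real" where
  "piJ N q D J t = Max ((\<lambda>j. \<bar>dhat N q D J t - D j t\<bar>) ` J)"

definition supp_vec :: "nat \<Rightarrow> (nat \<Rightarrow> real) \<Rightarrow> nat set" where
  "supp_vec N v = {i \<in> {1..N}. v i \<noteq> 0}"

definition nu_norm :: "nat \<Rightarrow> (nat \<Rightarrow> real \<Rightarrow> real) \<Rightarrow> real" where
  "nu_norm N nu = Max ((\<lambda>j. SUP t\<in>{0..}. \<bar>nu j t\<bar>) ` {1..N})"

end

theory Submission
  imports Defs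
begin

lemma nu_le:
  assumes "\<forall>j\<in>{1..N}. bounded ((\<lambda>t. nu j t) ` {0..})" "j \<in> {1..N}" "(t::real) \<ge> 0"
  shows "\<bar>nu j t\<bar> \<le> nu_norm N nu"
proof -
  have "bounded ((\<lambda>t. nu j t) ` {0..})" using assms by auto
  then obtain B where B: "\<forall>x\<in>(\<lambda>t. nu j t) ` {0..}. \<bar>x\<bar> \<le> B" using bounded_real by blast
  have bdd: "bdd_above ((\<lambda>t. \<bar>nu j t\<bar>) ` {0..})"
    using B by (auto intro!: bdd_aboveI[where M=B])
  have "\<bar>nu j t\<bar> \<le> (SUP t\<in>{0..}. \<bar>nu j t\<bar>)"
    using bdd assms(3) by (intro cSUP_upper) auto
  also have "\<dots> \<le> nu_norm N nu" unfolding nu_norm_def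
    using assms(2) by (intro Max_ge) auto
  finally show ?thesis .
qed

lemma avg_bound:
  fixes e :: "nat \<Rightarrow> real"
  assumes "finite J" "card J = n" "n > 0" "\<forall>i\<in>J. \<bar>e i\<bar> \<le> M"
  shows "\<bar>(1 / real n) * (\<Sum>i\<in>J. e i)\<bar> \<le> M"
proof -
  have "\<bar>\<Sum>i\<in>J. e i\<bar> \<le> (\<Sum>i\<in>J. \<bar>e i\<bar>)" by (rule sum_abs)
  also have "\<dots> \<le> (\<Sum>i\<in>J. M)" using assms(4) by (intro sum_mono) auto
  also have "\<dots> = real n * M" using assms(2) by simp
  finally have "\<bar>\<Sum>i\<in>J. e i\<bar> \<le> real n * M" .
  thus ?thesis using assms(3) by (simp add: abs_mult field_simps)
qed

theorem theorem2:
  fixes N q :: nat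
    and d :: "real \<Rightarrow> real"
    and nu :: "nat \<Rightarrow> real \<Rightarrow> real"
    and eta :: "real \<Rightarrow> nat \<Rightarrow> real"
    and sigma :: "real \<Rightarrow> nat set"
  assumes "N \<ge> 1" and "2 * q < N"
    and nu_bdd: "\<forall>j\<in>{1..N}. bounded ((\<lambda>t. nu j t) ` {0..})"
    and eta_sparse: "\<forall>t\<ge>0. \<exists>W. W \<subseteq> {1..N} \<and> card W \<le> q \<and> supp_vec N (eta t) \<subseteq> W"
    and sigma_card: "\<forall>t\<ge>0. sigma t \<subseteq> {1..N} \<and> card (sigma t) = N - q"
    and sigma_min: "\<forall>t\<ge>0. \<forall>J. J \<subseteq> {1..N} \<and> card J = N - q \<longrightarrow>
        piJ N q (meas d nu eta) (sigma t) t \<le> piJ N q (meas d nu eta) J t"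
  shows "\<forall>t\<ge>0. \<bar>dhat N q (meas d nu eta) (sigma t) t - d t\<bar> \<le> 3 * nu_norm N nu"
proof (intro allI impI)
  fix t :: real assume t: "t \<ge> 0"
  define M where "M = nu_norm N nu"
  define D where "D = meas d nu eta"
  have nuM: "\<And>j. j \<in> {1..N} \<Longrightarrow> \<bar>nu j t\<bar> \<le> M"
    unfolding M_def using nu_le[OF nu_bdd _ t] by blast
  obtain W where W: "W \<subseteq> {1..N}" "card W \<le> q" "supp_vec N (eta t) \<subseteq> W"
    using eta_sparse t by blast
  have good: "\<And>j. j \<in> {1..N} - W \<Longrightarrow> D j t = d t + nu j t"
    using W(3) unfolding D_def meas_def supp_vec_def by auto
  have finW: "finite W" using W(1) finite_subset by blast
  have "card ({1..N} - W) = N - card W" using W(1) finW by (simp add: card_Diff_subset)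
  hence "N - q \<le> card ({1..N} - W)" using W(2) by simp
  then obtain J0 where J0: "J0 \<subseteq> {1..N} - W" "card J0 = N - q"
    by (meson obtain_subset_with_card_n)
  have npos: "N - q > 0" using assms(2) by simp
  have finJ0: "finite J0" using J0(1) finite_subset by blast
  have J0ne: "J0 \<noteq> {}" using J0(2) npos by auto
  have dh0: "dhat N q D J0 t = d t + (1 / real (N - q)) * (\<Sum>i\<in>J0. nu i t)"
  proof -
    have "(\<Sum>i\<in>J0. D i t) = (\<Sum>i\<in>J0. d t + nu i t)"
      using J0(1) good by (intro sum.cong) auto
    also have "\<dots> = real (N - q) * d t + (\<Sum>i\<in>J0. nu i t)"
      using J0(2) by (simp add: sum.distrib)
    finally show ?thesis unfolding dhat_def using npos by (simp add: field_simps)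
  qed
  have avg0: "\<bar>(1 / real (N - q)) * (\<Sum>i\<in>J0. nu i t)\<bar> \<le> M"
    using J0 npos nuM by (intro avg_bound[OF finJ0 J0(2)]) auto
  have pi0: "piJ N q D J0 t \<le> 2 * M"
    unfolding piJ_def
  proof (subst Max_le_iff)
    show "finite ((\<lambda>j. \<bar>dhat N q D J0 t - D j t\<bar>) ` J0)" using finJ0 by simp
    show "(\<lambda>j. \<bar>dhat N q D J0 t - D j t\<bar>) ` J0 \<noteq> {}" using J0ne by simp
    show "\<forall>a\<in>(\<lambda>j. \<bar>dhat N q D J0 t - D j t\<bar>) ` J0. a \<le> 2 * M"
    proof
      fix a assume "a \<in> (\<lambda>j. \<bar>dhat N q D J0 t - D j t\<bar>) ` J0"
      then obtain j where j: "j \<in> J0" "a = \<bar>dhat N q D J0 t - D j t\<bar>" by auto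
      have "D j t = d t + nu j t" using good j(1) J0(1) by auto
      moreover have "\<bar>nu j t\<bar> \<le> M" using nuM j(1) J0(1) by auto
      ultimately show "a \<le> 2 * M"
      proof -
        assume e: "D j t = d t + nu j t" and m: "\<bar>nu j t\<bar> \<le> M"
        have "a = \<bar>(1 / real (N - q)) * (\<Sum>i\<in>J0. nu i t) - nu j t\<bar>"
          using j(2) dh0 e by simp
        also have "\<dots> \<le> \<bar>(1 / real (N - q)) * (\<Sum>i\<in>J0. nu i t)\<bar> + \<bar>nu j t\<bar>"
          by (rule abs_triangle_ineq4)
        also have "\<dots> \<le> M + M" using avg0 m by (rule add_mono)
        finally show ?thesis by simp
      qed
    qed
  qed
  have sig: "sigma t \<subseteq> {1..N}" "card (sigma t) = N - q" using sigma_card t by auto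
  have pis: "piJ N q D (sigma t) t \<le> 2 * M"
  proof -
    have "J0 \<subseteq> {1..N}" using J0(1) by blast
    hence "piJ N q D (sigma t) t \<le> piJ N q D J0 t"
      using sigma_min t J0(2) unfolding D_def by blast
    thus ?thesis using pi0 by linarith
  qed
  have finS: "finite (sigma t)" using sig(1) finite_subset by blast
  have "card (sigma t) - card W \<le> card (sigma t - W)" by (rule diff_card_le_card_Diff[OF finW])
  hence "card (sigma t - W) > 0" using sig(2) W(2) assms(2) by linarith
  then obtain j where j: "j \<in> sigma t" "j \<notin> W" by (metis Diff_iff card_gt_0_iff ex_in_conv)
  have jN: "j \<in> {1..N} - W" using j sig(1) by auto
  have "\<bar>dhat N q D (sigma t) t - D j t\<bar> \<le> piJ N q D (sigma t) t"
    unfolding piJ_def using finS j(1) by (intro Max_ge) auto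
  hence "\<bar>dhat N q D (sigma t) t - D j t\<bar> \<le> 2 * M" using pis by linarith
  moreover have "D j t = d t + nu j t" using good jN by blast
  moreover have "\<bar>nu j t\<bar> \<le> M" using nuM jN by auto
  ultimately show "\<bar>dhat N q (meas d nu eta) (sigma t) t - d t\<bar> \<le> 3 * nu_norm N nu"
    unfolding D_def[symmetric] M_def[symmetric] by auto
qed

end
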